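(* Let $n$ be a positive integer and let $Cl$ be a clique (complete graph) on $\sqrt{n}$ nodes, whose edges carry local port labels at each endpoint. Suppose each node of $Cl$ has a whiteboard of $O(\log n)$ bits of storage and two mobile agents, each with $O(\log n)$ bits of memory, operate in $Cl$. Then the two agents cannot construct the map of $Cl$.
   Context: Constructing the map of a graph means that the agents compute (store) a copy of the graph including all of its port labels. Agents can read and write the whiteboards of the nodes they visit; the only storage available is the agents' memory and the nodes' whiteboards. *)

theory Defs
  imports Complex_Main
begin

text \<open>A port labelling P assigns to each
 node v a bijection P v from its neighbours {u. u < m, u \<noteq> v} to the local
 port numbers {0..<m-1}; P v u is the port at v of the edge {v,u}.\<close>

definition valid_labeling :: "nat \<Rightarrow> (nat \<Rightarrow> nat \<Rightarrow> nat) \<Rightarrow> bool" where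
  "valid_labeling m P \<longleftrightarrow> (\<forall>v<m. bij_betw (P v) {u. u < m \<and> u \<noteq> v} {0..<m-1})"

text \<open>Two port-labelled cliques are the same map if they are isomorphic
 (node names are irrelevant, port labels must be preserved).\<close>

definition iso_labeling :: "nat \<Rightarrow> (nat \<Rightarrow> nat \<Rightarrow> nat) \<Rightarrow> (nat \<Rightarrow> nat \<Rightarrow> nat) \<Rightarrow> bool" where
  "iso_labeling m Q P \<longleftrightarrow> (\<exists>\<sigma>. bij_betw \<sigma> {..<m} {..<m} \<and>
      (\<forall>u<m. \<forall>v<m. u \<noteq> v \<longrightarrow> Q (\<sigma> u) (\<sigma> v) = P u v))"

definition dest :: "(nat \<Rightarrow> nat \<Rightarrow> nat) \<Rightarrow> nat \<Rightarrow> nat \<Rightarrow> nat \<Rightarrow> nat" where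
  "dest P m v p = (THE u. u < m \<and> u \<noteq> v \<and> P v u = p)"

text \<open>A deterministic two-agent algorithm (agents are named False / True).
 Agent memories and whiteboards are natural numbers (bit strings).
 delta: (memory, whiteboard content) \<mapsto> (new memory, new whiteboard content, action),
   action None = stay, Some p = leave via port p;
 arrive: memory update on arrival, given the entry port;
 decode: computes the map from a snapshot of all storage (agent memories, whiteboards).\<close>

record agent_alg =
  init :: "bool \<Rightarrow> nat"
  delta :: "nat \<Rightarrow> nat \<Rightarrow> nat \<times> nat \<times> nat option"
  arrive :: "nat \<Rightarrow> nat \<Rightarrow> nat"
  decode :: "(bool \<Rightarrow> nat) \<Rightarrow> (nat \<Rightarrow> nat) \<Rightarrow> (nat \<Rightarrow> nat \<Rightarrow> nat)"

type_synonym config = "(bool \<Rightarrow> nat) \<times> (bool \<Rightarrow> nat) \<times> (nat \<Rightarrow> nat)"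
  (* positions, memories, whiteboards *)

definition step :: "agent_alg \<Rightarrow> (nat \<Rightarrow> nat \<Rightarrow> nat) \<Rightarrow> nat \<Rightarrow> bool \<Rightarrow> config \<Rightarrow> config" where
  "step A P m i cfg = (case cfg of (pos, mem, wb) \<Rightarrow>
     (case delta A (mem i) (wb (pos i)) of (s', w', act) \<Rightarrow>
        (case act of
           None \<Rightarrow> (pos, mem(i := s'), wb(pos i := w'))
         | Some p \<Rightarrow>
             (if p < m - 1 then
                (let u = dest P m (pos i) p
                 in (pos(i := u), mem(i := arrive A s' (P u (pos i))), wb(pos i := w')))
              else (pos, mem(i := s'), wb(pos i := w'))))))"

text \<open>Execution: sched P t is the agent acting at step t (arbitrary, possibly
 depending on the instance); start gives the initial nodes; whiteboards start blank.\<close>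

primrec run :: "agent_alg \<Rightarrow> ((nat \<Rightarrow> nat \<Rightarrow> nat) \<Rightarrow> nat \<Rightarrow> bool) \<Rightarrow> (bool \<Rightarrow> nat)
                 \<Rightarrow> (nat \<Rightarrow> nat \<Rightarrow> nat) \<Rightarrow> nat \<Rightarrow> nat \<Rightarrow> config" where
  "run A sched start P m 0 = (start, init A, (\<lambda>_. 0))"
| "run A sched start P m (Suc t) = step A P m (sched P t) (run A sched start P m t)"

text \<open>The algorithm, using at most B bits of agent memory and B bits per whiteboard,
 constructs the map of every port-labelled clique on m nodes: on every instance the
 storage bounds hold at all times, and at some time the storage snapshot decodes
 to (a copy of) the map.\<close>

definition constructs_map :: "nat \<Rightarrow> nat \<Rightarrow> agent_alg \<Rightarrow> ((nat \<Rightarrow> nat \<Rightarrow> nat) \<Rightarrow> nat \<Rightarrow> bool)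
                               \<Rightarrow> (bool \<Rightarrow> nat) \<Rightarrow> bool" where
  "constructs_map m B A sched start \<longleftrightarrow>
     (\<forall>P. valid_labeling m P \<longrightarrow>
        (\<forall>t i. fst (snd (run A sched start P m t)) i < 2 ^ B) \<and>
        (\<forall>t v. snd (snd (run A sched start P m t)) v < 2 ^ B) \<and>
        (\<exists>t. iso_labeling m
               (decode A (fst (snd (run A sched start P m t))) (snd (snd (run A sched start P m t)))) P))"

end

theory Submission
  imports Defs "HOL-Combinatorics.Permutations"
begin

lemma dest_lt:
  assumes "valid_labeling m P" "v < m" "p < m - 1"
  shows "dest P m v p < m"
proof -
  have b: "bij_betw (P v) {u. u < m \<and> u \<noteq> v} {0..<m-1}"
    using assms unfolding valid_labeling_def by blast
  have "p \<in> P v ` {u. u < m \<and> u \<noteq> v}"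
    using assms(3) bij_betw_imp_surj_on[OF b] by simp
  then obtain u where u: "u < m" "u \<noteq> v" "P v u = p" by blast
  have inj: "inj_on (P v) {u. u < m \<and> u \<noteq> v}" using b by (rule bij_betw_imp_inj_on)
  have uniq: "w = u" if "w < m \<and> w \<noteq> v \<and> P v w = p" for w
    using inj_onD[OF inj, of w u] that u by simp
  have "dest P m v p = u" unfolding dest_def
    by (rule the_equality) (use u uniq in blast)+
  then show ?thesis using u by simp
qed

lemma wb_upd: "\<forall>v. m \<le> v \<longrightarrow> wb v = 0 \<Longrightarrow> (x::nat) < m \<Longrightarrow> \<forall>v. m \<le> v \<longrightarrow> (wb(x := w)) v = (0::nat)"
  by auto

lemma pos_upd: "\<forall>j. pos j < (m::nat) \<Longrightarrow> u < m \<Longrightarrow> \<forall>j. (pos(i := u)) j < m"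
  by simp

lemma run_inv:
  assumes "valid_labeling m P" "\<forall>i. start i < m"
  shows "(\<forall>i. fst (run A sched start P m t) i < m) \<and>
         (\<forall>v. m \<le> v \<longrightarrow> snd (snd (run A sched start P m t)) v = 0)"
proof (induction t)
  case 0
  then show ?case using assms by simp
next
  case (Suc t)
  obtain pos mem wb where r: "run A sched start P m t = (pos, mem, wb)"
    by (metis prod_cases3)
  obtain s' w' act where d: "delta A (mem (sched P t)) (wb (pos (sched P t))) = (s', w', act)"
    by (metis prod_cases3)
  have ih: "\<forall>i. pos i < m" "\<forall>v. m \<le> v \<longrightarrow> wb v = 0" using Suc r by auto
  have pl: "pos (sched P t) < m" using ih by simp
  show ?case
  proof (cases act)
    case None
    have e: "run A sched start P m (Suc t) = (pos, mem(sched P t := s'), wb(pos (sched P t) := w'))"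
      by (simp add: r d step_def None)
    show ?thesis unfolding e using ih wb_upd[OF ih(2) pl] by simp
  next
    case (Some p)
    define i where "i = sched P t"
    show ?thesis
    proof (cases "p < m - 1")
      case True
      define u where "u = dest P m (pos i) p"
      have u: "u < m" unfolding u_def using dest_lt[OF assms(1) _ True] ih i_def by auto
      have e: "run A sched start P m (Suc t) =
          (pos(i := u), mem(i := arrive A s' (P u (pos i))), wb(pos i := w'))"
        using True unfolding i_def u_def by (simp add: r d step_def Some Let_def)
      show ?thesis unfolding e using pos_upd[OF ih(1) u] wb_upd[OF ih(2) pl[folded i_def]] by simp
    next
      case False
      have e: "run A sched start P m (Suc t) = (pos, mem(i := s'), wb(pos i := w'))"
        using False unfolding i_def by (simp add: r d step_def Some)
      show ?thesis unfolding e using ih wb_upd[OF ih(2) pl[folded i_def]] by simp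
    qed
  qed
qed

lemma fact_lb: "k \<le> n \<Longrightarrow> k ^ (n - k) \<le> fact n"
proof (induction n)
  case 0
  then show ?case by simp
next
  case (Suc n)
  show ?case
  proof (cases "k \<le> n")
    case True
    then have "k ^ (Suc n - k) = k * k ^ (n - k)" by (simp add: Suc_diff_le)
    also have "\<dots> \<le> Suc n * fact n" using Suc True by (intro mult_le_mono) auto
    finally show ?thesis by (simp add: fact_Suc)
  next
    case False
    then have "k = Suc n" using Suc by simp
    then show ?thesis using fact_ge_1[of "Suc n", where 'a=nat] by simp
  qed
qed

lemma fact_poly:
  assumes "m \<ge> 4 * L + 8"
  shows "m ^ L \<le> (fact (m - 1) :: nat)"
proof -
  define k where "k = (m - 1) div 2"
  have k3: "k \<ge> 3" "k \<ge> 2 * L" using assms unfolding k_def by auto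
  have "m \<le> 2 * k + 2" unfolding k_def by auto
  also have "\<dots> \<le> k * k"
  proof -
    have "3 * k \<le> k * k" using k3 by (intro mult_le_mono1) simp
    then show ?thesis using k3 by linarith
  qed
  finally have "m \<le> k ^ 2" by (simp add: power2_eq_square)
  then have "m ^ L \<le> (k ^ 2) ^ L" by (rule power_mono) simp
  also have "\<dots> = k ^ (2 * L)" by (simp add: power_mult)
  also have "\<dots> \<le> k ^ k" using k3 by (intro power_increasing) auto
  also have "\<dots> \<le> k ^ (m - 1 - k)" using k3 unfolding k_def by (intro power_increasing) auto
  also have "\<dots> \<le> fact (m - 1)" by (rule fact_lb) (simp add: k_def)
  finally show ?thesis .
qed


lemma numeric:
  fixes K m :: nat
  assumes "m \<ge> 4 * (K + 3) + 8"
  shows "fact m * (m ^ K) ^ (m + 2) < (fact (m - 1) :: nat) ^ m"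
proof -
  have "fact m * (m ^ K) ^ (m + 2) \<le> m ^ m * (m ^ K) ^ (m + 2)"
    using fact_le_power[of m, where 'a=nat] by (intro mult_le_mono1) simp
  also have "\<dots> = m ^ (m + K * (m + 2))" by (simp add: power_add power_mult)
  also have "\<dots> < m ^ ((K + 3) * m)"
    using assms by (intro power_strict_increasing) (auto simp: algebra_simps)
  also have "\<dots> = (m ^ (K + 3)) ^ m" by (simp add: power_mult)
  also have "\<dots> \<le> fact (m - 1) ^ m"
    using fact_poly[OF assms] by (rule power_mono) simp
  finally show ?thesis .
qed

definition bb :: "nat \<Rightarrow> nat \<Rightarrow> nat" where
  "bb v u = (if u < v then u else u - 1)"

definition phi :: "nat \<Rightarrow> (nat \<Rightarrow> nat \<Rightarrow> nat) \<Rightarrow> (nat \<Rightarrow> nat \<Rightarrow> nat)" where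
  "phi m \<pi> = (\<lambda>v u. if v < m \<and> u < m \<and> u \<noteq> v then \<pi> v (bb v u) else 0)"

lemma bb_bij: "v < m \<Longrightarrow> bij_betw (bb v) {u. u < m \<and> u \<noteq> v} {0..<m-1}"
  by (rule bij_betw_byWitness[where f'="\<lambda>x. if x < v then x else x + 1"])
     (auto simp: bb_def)

lemma phi_valid:
  assumes "\<pi> \<in> (\<Pi>\<^sub>E v\<in>{..<m}. {p. p permutes {..<m-1}})"
  shows "valid_labeling m (phi m \<pi>)"
  unfolding valid_labeling_def
proof (intro allI impI)
  fix v assume v: "v < m"
  have p: "\<pi> v permutes {..<m-1}" using assms v by auto
  have "bij_betw (\<pi> v \<circ> bb v) {u. u < m \<and> u \<noteq> v} {0..<m-1}"
    using bij_betw_trans[OF bb_bij[OF v], of "\<pi> v" "{0..<m-1}"] permutes_imp_bij[OF p]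
    by (simp add: lessThan_atLeast0)
  then show "bij_betw (phi m \<pi> v) {u. u < m \<and> u \<noteq> v} {0..<m-1}"
    by (rule bij_betw_cong[THEN iffD1, rotated]) (auto simp: phi_def v)
qed

lemma phi_inj: "inj_on (phi m) (\<Pi>\<^sub>E v\<in>{..<m}. {p. p permutes {..<m-1}})"
proof (rule inj_onI)
  fix \<pi> \<pi>' assume a: "\<pi> \<in> (\<Pi>\<^sub>E v\<in>{..<m}. {p. p permutes {..<m-1}})"
    "\<pi>' \<in> (\<Pi>\<^sub>E v\<in>{..<m}. {p. p permutes {..<m-1}})" and e: "phi m \<pi> = phi m \<pi>'"
  show "\<pi> = \<pi>'"
  proof (rule ext)
    fix v
    show "\<pi> v = \<pi>' v"
    proof (cases "v < m")
      case v: True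
      have p: "\<pi> v permutes {..<m-1}" "\<pi>' v permutes {..<m-1}" using a v by auto
      show ?thesis
      proof (rule ext)
        fix x
        show "\<pi> v x = \<pi>' v x"
        proof (cases "x < m - 1")
          case True
          define u where "u = (if x < v then x else x + 1)"
          have u: "u < m" "u \<noteq> v" "bb v u = x" using True v by (auto simp: u_def bb_def)
          have "phi m \<pi> v u = phi m \<pi>' v u" using e by simp
          then show ?thesis using u v by (simp add: phi_def)
        next
          case False
          then show ?thesis using p by (simp add: permutes_not_in)
        qed
      qed
    next
      case False
      then show ?thesis using a by (auto simp: PiE_def extensional_def)
    qed
  qed
qed

lemma card_phi: "card (phi m ` (\<Pi>\<^sub>E v\<in>{..<m}. {p. p permutes {..<m-1}})) = fact (m - 1) ^ m"
proof -
  have "card {p. p permutes {..<m-1}} = fact (m - 1)" by (rule card_permutations) auto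
  then show ?thesis by (simp add: card_image[OF phi_inj] card_PiE del: One_nat_def)
qed


definition psi :: "nat \<Rightarrow> (nat \<Rightarrow> nat \<Rightarrow> nat) \<Rightarrow> (nat \<Rightarrow> nat) \<Rightarrow> (nat \<Rightarrow> nat \<Rightarrow> nat)" where
  "psi m Q \<sigma> = (\<lambda>u v. if u < m \<and> v < m \<and> u \<noteq> v then Q (\<sigma> u) (\<sigma> v) else 0)"

lemma iso_class_sub:
  "{P \<in> phi m ` (\<Pi>\<^sub>E v\<in>{..<m}. {p. p permutes {..<m-1}}). iso_labeling m Q P}
     \<subseteq> psi m Q ` {\<sigma>. \<sigma> permutes {..<m}}"
proof
  fix P assume "P \<in> {P \<in> phi m ` (\<Pi>\<^sub>E v\<in>{..<m}. {p. p permutes {..<m-1}}). iso_labeling m Q P}"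
  then obtain \<pi> \<sigma> where P: "P = phi m \<pi>" and s: "bij_betw \<sigma> {..<m} {..<m}"
    and q: "\<forall>u<m. \<forall>v<m. u \<noteq> v \<longrightarrow> Q (\<sigma> u) (\<sigma> v) = P u v"
    unfolding iso_labeling_def by blast
  define \<sigma>' where "\<sigma>' = (\<lambda>x. if x < m then \<sigma> x else x)"
  have "bij_betw \<sigma>' {..<m} {..<m}"
    using s by (rule bij_betw_cong[THEN iffD1, rotated]) (auto simp: \<sigma>'_def)
  then have "\<sigma>' permutes {..<m}" by (rule bij_imp_permutes) (auto simp: \<sigma>'_def)
  moreover have "P = psi m Q \<sigma>'"
    using q unfolding P psi_def \<sigma>'_def by (auto simp: phi_def fun_eq_iff)
  ultimately show "P \<in> psi m Q ` {\<sigma>. \<sigma> permutes {..<m}}" by blast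
qed

lemma iso_class_card:
  "finite {P \<in> phi m ` (\<Pi>\<^sub>E v\<in>{..<m}. {p. p permutes {..<m-1}}). iso_labeling m Q P}
   \<and> card {P \<in> phi m ` (\<Pi>\<^sub>E v\<in>{..<m}. {p. p permutes {..<m-1}}). iso_labeling m Q P} \<le> fact m"
proof -
  have f: "finite {\<sigma>. \<sigma> permutes {..<m}}" by (rule finite_permutations) simp
  have c: "card {\<sigma>. \<sigma> permutes {..<m}} = fact m" by (rule card_permutations) auto
  show ?thesis
    using iso_class_sub[of m Q] card_mono[OF finite_imageI[OF f] iso_class_sub[of m Q]]
      card_image_le[OF f, of "psi m Q"] c finite_subset[OF iso_class_sub finite_imageI[OF f]]
    by simp
qed

definition snaps :: "nat \<Rightarrow> nat \<Rightarrow> ((bool \<Rightarrow> nat) \<times> (nat \<Rightarrow> nat)) set" where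
  "snaps m b = {(mm, w). (\<forall>i. mm i < b) \<and> (\<forall>v. w v < b) \<and> (\<forall>v. m \<le> v \<longrightarrow> w v = 0)}"

lemma snaps_card: "finite (snaps m b) \<and> card (snaps m b) \<le> b ^ (m + 2)"
proof -
  define T where "T = ({..<b} \<times> {..<b}) \<times> (\<Pi>\<^sub>E v\<in>{..<m}. {..<b})"
  define g where "g = (\<lambda>((x::nat, y::nat), f::nat\<Rightarrow>nat).
      ((\<lambda>i::bool. if i then x else y), (\<lambda>v. if v < m then f v else 0)))"
  have fT: "finite T" unfolding T_def by (auto intro: finite_PiE)
  have cT: "card T = b ^ (m + 2)" unfolding T_def
    by (simp add: card_cartesian_product card_PiE power_add power2_eq_square)
  have sub: "snaps m b \<subseteq> g ` T"
  proof
    fix z assume "z \<in> snaps m b"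
    then obtain mm w where z: "z = (mm, w)" and h: "\<forall>i. mm i < b" "\<forall>v. w v < b"
      "\<forall>v. m \<le> v \<longrightarrow> w v = 0" unfolding snaps_def by blast
    have "((mm True, mm False), restrict w {..<m}) \<in> T" using h unfolding T_def by auto
    moreover have "z = g ((mm True, mm False), restrict w {..<m})"
      unfolding z g_def using h(3) by (auto simp: fun_eq_iff not_less)
    ultimately show "z \<in> g ` T" by blast
  qed
  show ?thesis
    using finite_subset[OF sub finite_imageI[OF fT]] card_mono[OF finite_imageI[OF fT] sub]
      card_image_le[OF fT, of g] cT by simp
qed


lemma pow_bound:
  fixes c :: real and m :: nat
  assumes "m \<ge> 1"
  shows "(2::nat) ^ nat \<lfloor>c * log 2 (real (m ^ 2))\<rfloor> \<le> m ^ nat \<lceil>2 * \<bar>c\<bar>\<rceil>"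
proof -
  define B where "B = nat \<lfloor>c * log 2 (real (m ^ 2))\<rfloor>"
  define K where "K = nat \<lceil>2 * \<bar>c\<bar>\<rceil>"
  have lm: "log 2 (real (m ^ 2)) = 2 * log 2 (real m)" using assms
    by (simp add: log_nat_power)
  have l0: "log 2 (real m) \<ge> 0" using assms by simp
  have "real B \<le> max 0 (c * log 2 (real (m ^ 2)))" unfolding B_def by linarith
  also have "\<dots> \<le> (2 * \<bar>c\<bar>) * log 2 (real m)" unfolding lm using l0
    by (auto intro!: mult_right_mono simp: abs_if mult_nonpos_nonneg)
  also have "\<dots> \<le> real K * log 2 (real m)" unfolding K_def
    by (intro mult_right_mono l0) linarith
  finally have bB: "real B \<le> real K * log 2 (real m)" .
  have "real (2 ^ B) = 2 powr real B" by (simp add: powr_realpow)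
  also have "\<dots> \<le> 2 powr (real K * log 2 (real m))" using bB by simp
  also have "\<dots> = (2 powr log 2 (real m)) powr real K" by (simp add: powr_powr mult.commute)
  also have "\<dots> = real m powr real K" using assms by simp
  also have "\<dots> = real (m ^ K)" using assms by (simp add: powr_realpow)
  finally show ?thesis unfolding B_def K_def by linarith
qed

theorem lemma1:
  fixes c :: real
  shows "\<exists>N::nat. \<forall>n m::nat. N \<le> n \<and> n = m ^ 2 \<longrightarrow>
           (\<forall>A sched start. (\<forall>i. start i < m) \<longrightarrow>
              \<not> constructs_map m (nat \<lfloor>c * log 2 (real n)\<rfloor>) A sched start)"
proof -
  define K where "K = nat \<lceil>2 * \<bar>c\<bar>\<rceil>"
  define M where "M = 4 * (K + 3) + 8"
  show ?thesis
  proof (rule exI[of _ "M ^ 2"], intro allI impI notI, elim conjE)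
    fix n m :: nat and A sched start
    assume nN: "M ^ 2 \<le> n" and nm: "n = m ^ 2" and st: "\<forall>i. start i < m"
      and cm: "constructs_map m (nat \<lfloor>c * log 2 (real n)\<rfloor>) A sched start"
    have mM: "M \<le> m" using nN nm power2_le_imp_le[of M m] by simp
    then have m1: "m \<ge> 1" unfolding M_def by simp
    define B where "B = nat \<lfloor>c * log 2 (real n)\<rfloor>"
    define b where "b = (2::nat) ^ B"
    have bK: "b \<le> m ^ K" unfolding b_def B_def K_def nm by (rule pow_bound[OF m1])
    define F where "F = phi m ` (\<Pi>\<^sub>E v\<in>{..<m}. {p. p permutes {..<m-1}})"
    define G where "G = (\<lambda>Q. {P \<in> F. iso_labeling m Q P})"
    define U where "U = (\<Union>s\<in>snaps m b. G (decode A (fst s) (snd s)))"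
    have FU: "F \<subseteq> U"
    proof
      fix P assume PF: "P \<in> F"
      then have val: "valid_labeling m P" unfolding F_def using phi_valid by blast
      from cm[unfolded constructs_map_def, rule_format, OF val] obtain t where
        bm: "\<forall>t i. fst (snd (run A sched start P m t)) i < 2 ^ B" and
        bw: "\<forall>t v. snd (snd (run A sched start P m t)) v < 2 ^ B" and
        it: "iso_labeling m (decode A (fst (snd (run A sched start P m t))) (snd (snd (run A sched start P m t)))) P"
        unfolding B_def by blast
      have z: "\<forall>v. m \<le> v \<longrightarrow> snd (snd (run A sched start P m t)) v = 0"
        using run_inv[OF val st] by blast
      have sin: "(fst (snd (run A sched start P m t)), snd (snd (run A sched start P m t))) \<in> snaps m b"
        unfolding snaps_def b_def using bm bw z by blast
      have PG: "P \<in> G (decode A (fst (snd (run A sched start P m t))) (snd (snd (run A sched start P m t))))"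
        unfolding G_def using PF it by blast
      show "P \<in> U" unfolding U_def
        using UN_I[OF sin, of P "\<lambda>s. G (decode A (fst s) (snd s))"] PG by simp
    qed
    have fs: "finite (snaps m b)" and cs: "card (snaps m b) \<le> b ^ (m + 2)" using snaps_card by auto
    have fG: "\<And>Q. finite (G Q)" and cG: "\<And>Q. card (G Q) \<le> fact m"
      unfolding G_def F_def using iso_class_card by auto
    have fU: "finite U" unfolding U_def using fs fG by (intro finite_UN_I)
    have "fact (m - 1) ^ m = card F" unfolding F_def by (rule card_phi[symmetric])
    also have "\<dots> \<le> card U" by (rule card_mono[OF fU FU])
    also have "\<dots> \<le> (\<Sum>s\<in>snaps m b. card (G (decode A (fst s) (snd s))))"
      unfolding U_def by (rule card_UN_le[OF fs])
    also have "\<dots> \<le> card (snaps m b) * fact m" using sum_bounded_above[of "snaps m b" "\<lambda>s. card (G (decode A (fst s) (snd s)))" "fact m"] cG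
      by simp
    also have "\<dots> \<le> (m ^ K) ^ (m + 2) * fact m"
      using cs power_mono[OF bK, of "m + 2"] by (intro mult_le_mono1) simp
    also have "\<dots> < fact (m - 1) ^ m" using numeric[of K m] mM unfolding M_def by (simp add: mult.commute)
    finally show False by simp
  qed
qed

end
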